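(* Let $M$ be a finite item set, $n\ge1$, and $v$ a normalized monotone valuation on $M$. (1) If $v$ is subadditive, then $\mathrm{RMMS}(M,v,n)\ge \frac1n\,\mathrm{MMS}(M,v,n)$. (2) If $v$ is additive, then $\mathrm{RMMS}(M,v,n)\ge \rho_n\,\mathrm{MMS}(M,v,n)$, where $\rho_n=\frac{2n}{3n-1}$ for odd $n$ and $\rho_n=\frac{2n-2}{3n-4}$ for even $n$; in particular $\mathrm{RMMS}(M,v,n)\ge\frac23\,\mathrm{MMS}(M,v,n)$.
   Context: A valuation is a function $v:2^M\to\mathbb{R}_{\ge0}$ that is normalized ($v(\emptyset)=0$) and monotone. It is additive if $v(S)=\sum_{e\in S}v(\{e\})$ for all $S$, and subadditive if $v(S)+v(T)\ge v(S\cup T)$ for all $S,T\subseteq M$. $\mathrm{MMS}(M,v,n)$ is the maximum, over all partitions $P_1,\dots,P_n$ of $M$ into $n$ (possibly empty) parts, of $\min_j v(P_j)$. Residual maximin share: $\mathrm{RMMS}(M,v,n)$ is the largest real $t$ with the following property: for every $0\le k<n$ and every $k$ pairwise disjoint bundles $B_1,\dots,B_k\subseteq M$ with $v(B_j)<t$ for all $j$, the set $M\setminus(B_1\cup\dots\cup B_k)$ can be partitioned into $n-k$ bundles each of value (under $v$) at least $t$. *)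

theory Defs
  imports Main "HOL.Real"
begin

definition valuation :: "'a set \<Rightarrow> ('a set \<Rightarrow> real) \<Rightarrow> bool" where
  "valuation M v \<longleftrightarrow> v {} = 0 \<and> (\<forall>S. S \<subseteq> M \<longrightarrow> v S \<ge> 0)
     \<and> (\<forall>S T. S \<subseteq> T \<longrightarrow> T \<subseteq> M \<longrightarrow> v S \<le> v T)"

definition additive_val :: "'a set \<Rightarrow> ('a set \<Rightarrow> real) \<Rightarrow> bool" where
  "additive_val M v \<longleftrightarrow> (\<forall>S. S \<subseteq> M \<longrightarrow> v S = (\<Sum>e\<in>S. v {e}))"

definition subadditive_val :: "'a set \<Rightarrow> ('a set \<Rightarrow> real) \<Rightarrow> bool" where
  "subadditive_val M v \<longleftrightarrow> (\<forall>S T. S \<subseteq> M \<longrightarrow> T \<subseteq> M \<longrightarrow> v S + v T \<ge> v (S \<union> T))"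

definition is_partition :: "'a set \<Rightarrow> nat \<Rightarrow> (nat \<Rightarrow> 'a set) \<Rightarrow> bool" where
  "is_partition S n P \<longleftrightarrow> (\<Union>j<n. P j) = S \<and> (\<forall>i<n. \<forall>j<n. i \<noteq> j \<longrightarrow> P i \<inter> P j = {})"

definition MMS :: "'a set \<Rightarrow> ('a set \<Rightarrow> real) \<Rightarrow> nat \<Rightarrow> real" where
  "MMS M v n = Sup {Min ((\<lambda>j. v (P j)) ` {..<n}) | P. is_partition M n P}"

definition RMMS_prop :: "'a set \<Rightarrow> ('a set \<Rightarrow> real) \<Rightarrow> nat \<Rightarrow> real \<Rightarrow> bool" where
  "RMMS_prop M v n t \<longleftrightarrow>
     (\<forall>k<n. \<forall>B :: nat \<Rightarrow> 'a set.
        (\<forall>j<k. B j \<subseteq> M) \<and> (\<forall>i<k. \<forall>j<k. i \<noteq> j \<longrightarrow> B i \<inter> B j = {}) \<and> (\<forall>j<k. v (B j) < t)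
        \<longrightarrow> (\<exists>P. is_partition (M - (\<Union>j<k. B j)) (n - k) P \<and> (\<forall>j<n - k. v (P j) \<ge> t)))"

text \<open>The largest t with the property (the property is downward closed and bounded, so this is its supremum).\<close>
definition RMMS :: "'a set \<Rightarrow> ('a set \<Rightarrow> real) \<Rightarrow> nat \<Rightarrow> real" where
  "RMMS M v n = Sup {t. RMMS_prop M v n t}"

definition rho :: "nat \<Rightarrow> real" where
  "rho n = (if odd n then 2 * real n / (3 * real n - 1) else (2 * real n - 2) / (3 * real n - 4))"

end

theory Submission
  imports Defs
begin


lemma part_ext:
  assumes "is_partition S m P" "Y \<inter> S = {}"
  shows "is_partition (S \<union> Y) (Suc m) (P(m := Y))"
proof -
  have u: "(\<Union>j<Suc m. (P(m := Y)) j) = (\<Union>j<m. P j) \<union> Y"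
    by (auto simp: lessThan_Suc)
  have sub: "\<forall>j<m. P j \<subseteq> S" using assms(1) unfolding is_partition_def by auto
  show ?thesis using assms(1) assms(2) sub unfolding is_partition_def u
    by (auto simp: less_Suc_eq)
qed

lemma two_elems:
  assumes "2 \<le> card A" obtains a b where "a \<in> A" "b \<in> A" "a \<noteq> b"
proof -
  have f: "finite A" using assms by (metis card.infinite not_numeral_le_zero)
  obtain a where a: "a \<in> A" using assms by fastforce
  have "card (A - {a}) \<ge> 1" using a f assms by simp
  then obtain b where "b \<in> A - {a}" by (metis card.empty equals0I not_one_le_zero)
  then show thesis using that a by blast
qed

lemma groupB:
  fixes f :: "'a set \<Rightarrow> real" and X :: "nat \<Rightarrow> 'a set"
  assumes mono: "\<And>Y Z. Y \<subseteq> Z \<Longrightarrow> Z \<subseteq> M \<Longrightarrow> f Y \<le> f Z"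
  shows "finite I \<Longrightarrow> (\<forall>i\<in>I. X i \<subseteq> M) \<Longrightarrow> (\<forall>i\<in>I. \<forall>j\<in>I. i \<noteq> j \<longrightarrow> X i \<inter> X j = {})
   \<Longrightarrow> (\<forall>i\<in>I. \<forall>j\<in>I. i \<noteq> j \<longrightarrow> f (X i) < t \<longrightarrow> f (X j) < t \<longrightarrow> f (X i \<union> X j) \<ge> t)
   \<Longrightarrow> 1 \<le> T \<Longrightarrow> T \<le> card {i\<in>I. f (X i) \<ge> t} + card {i\<in>I. f (X i) < t} div 2
   \<Longrightarrow> \<exists>P. is_partition (\<Union>i\<in>I. X i) T P \<and> (\<forall>j<T. f (P j) \<ge> t)"
proof (induction T arbitrary: I)
  case 0 then show ?case by simp
next
  case (Suc T)
  let ?G = "{i\<in>I. f (X i) \<ge> t}"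
  let ?B = "{i\<in>I. f (X i) < t}"
  have UM: "(\<Union>i\<in>I. X i) \<subseteq> M" using Suc.prems by auto
  have fin: "finite ?G" "finite ?B" using Suc.prems(1) by auto
  have one: "is_partition (\<Union>i\<in>I. X i) (Suc 0) (\<lambda>j. \<Union>i\<in>I. X i)"
    unfolding is_partition_def by auto
  show ?case
  proof (cases "?G = {}")
    case False
    then obtain i where i: "i \<in> I" "f (X i) \<ge> t" by auto
    show ?thesis
    proof (cases "T = 0")
      case True
      have "f (\<Union>i\<in>I. X i) \<ge> t" using mono[of "X i" "\<Union>i\<in>I. X i"] i UM by (meson UN_upper order_trans)
      then show ?thesis using True one by auto
    next
      case False
      let ?I = "I - {i}"
      have G': "{l\<in>?I. f (X l) \<ge> t} = ?G - {i}" by auto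
      have B': "{l\<in>?I. f (X l) < t} = ?B" using i by auto
      have cG: "card (?G - {i}) = card ?G - 1" using i fin by auto
      have "card ?G \<ge> 1" using i fin by (auto simp: Suc_le_eq card_gt_0_iff)
      then have le: "T \<le> card {l\<in>?I. f (X l) \<ge> t} + card {l\<in>?I. f (X l) < t} div 2"
        unfolding G' B' cG using Suc.prems(6) by linarith
      obtain P where P: "is_partition (\<Union>l\<in>?I. X l) T P" "\<forall>j<T. f (P j) \<ge> t"
      proof -
        have "\<exists>P. is_partition (\<Union>l\<in>?I. X l) T P \<and> (\<forall>j<T. f (P j) \<ge> t)"
          apply (rule Suc.IH[OF _ _ _ _ _ le])
          using Suc.prems(1-4) False by auto
        then show ?thesis using that by blast
      qed
      have "X i \<inter> (\<Union>l\<in>?I. X l) = {}" using Suc.prems(3) i by auto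
      then have A: "is_partition ((\<Union>l\<in>?I. X l) \<union> X i) (Suc T) (P(T := X i))" by (rule part_ext[OF P(1)])
      have B: "(\<Union>l\<in>?I. X l) \<union> X i = (\<Union>l\<in>I. X l)" using i by auto
      have C: "\<forall>j<Suc T. f ((P(T := X i)) j) \<ge> t"
      proof (intro allI impI)
        fix j assume "j < Suc T"
        then show "f ((P(T := X i)) j) \<ge> t" using P(2) i by (cases "j = T") auto
      qed
      show ?thesis using A C unfolding B by blast
    qed
  next
    case True
    then have "card ?G = 0" by (simp only: card.empty)
    then have cB: "Suc T \<le> card ?B div 2" using Suc.prems(6) by linarith
    then have "card ?B \<ge> 2" by simp
    then obtain i j where ij: "i \<in> ?B" "j \<in> ?B" "i \<noteq> j" by (rule two_elems)
    let ?Y = "X i \<union> X j"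
    have fY: "f ?Y \<ge> t" using Suc.prems(4) ij by auto
    show ?thesis
    proof (cases "T = 0")
      case True
      have "f (\<Union>i\<in>I. X i) \<ge> t" using mono[of ?Y "\<Union>i\<in>I. X i"] fY ij UM by force
      then show ?thesis using True one by auto
    next
      case False
      let ?I = "I - {i, j}"
      have G': "{l\<in>?I. f (X l) \<ge> t} = {}" using True by auto
      have B': "{l\<in>?I. f (X l) < t} = ?B - {i,j}" by auto
      have cB': "card (?B - {i,j}) = card ?B - 2" using ij fin by (simp add: card_Diff_subset)
      have le: "T \<le> card {l\<in>?I. f (X l) \<ge> t} + card {l\<in>?I. f (X l) < t} div 2"
        unfolding G' B' cB' using cB by simp
      obtain P where P: "is_partition (\<Union>l\<in>?I. X l) T P" "\<forall>j<T. f (P j) \<ge> t"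
      proof -
        have "\<exists>P. is_partition (\<Union>l\<in>?I. X l) T P \<and> (\<forall>j<T. f (P j) \<ge> t)"
          apply (rule Suc.IH[OF _ _ _ _ _ le])
          using Suc.prems(1-4) False by auto
        then show ?thesis using that by blast
      qed
      have "?Y \<inter> (\<Union>l\<in>?I. X l) = {}" using Suc.prems(3) ij by auto
      then have A: "is_partition ((\<Union>l\<in>?I. X l) \<union> ?Y) (Suc T) (P(T := ?Y))" by (rule part_ext[OF P(1)])
      have B: "(\<Union>l\<in>?I. X l) \<union> ?Y = (\<Union>l\<in>I. X l)" using ij by auto
      have C: "\<forall>j<Suc T. f ((P(T := ?Y)) j) \<ge> t"
      proof (intro allI impI)
        fix j assume "j < Suc T"
        then show "f ((P(T := ?Y)) j) \<ge> t" using P(2) fY by (cases "j = T") auto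
      qed
      show ?thesis using A C unfolding B by blast
    qed
  qed
qed

lemma groupA:
  fixes v :: "'a set \<Rightarrow> real" and X :: "nat \<Rightarrow> 'a set"
  assumes mono: "\<And>Y Z. Y \<subseteq> Z \<Longrightarrow> Z \<subseteq> M \<Longrightarrow> v Y \<le> v Z"
    and nonneg: "\<And>Y. Y \<subseteq> M \<Longrightarrow> v Y \<ge> 0"
    and add: "\<And>Y Z. Y \<subseteq> M \<Longrightarrow> Z \<subseteq> M \<Longrightarrow> Y \<inter> Z = {} \<Longrightarrow> v (Y \<union> Z) = v Y + v Z"
    and t0: "0 \<le> t" and tmu: "t \<le> \<mu>"
    and H: "\<And>b K. 1 \<le> b \<Longrightarrow> b \<le> n \<Longrightarrow> real b * (\<mu> - t) < real K * t \<Longrightarrow> b \<le> 2 * K"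
  shows "finite I \<Longrightarrow> card I \<le> n \<Longrightarrow> (\<forall>i\<in>I. X i \<subseteq> M) \<Longrightarrow> (\<forall>i\<in>I. \<forall>j\<in>I. i \<noteq> j \<longrightarrow> X i \<inter> X j = {})
    \<Longrightarrow> (\<Sum>i\<in>I. max 0 (\<mu> - v (X i))) \<le> real K * t \<Longrightarrow> K < card I
    \<Longrightarrow> \<exists>P. is_partition (\<Union>i\<in>I. X i) (card I - K) P \<and> (\<forall>j<card I - K. v (P j) \<ge> t)"
proof (induction "card I" arbitrary: I X K rule: less_induct)
  case less
  note fin = less.prems(1)
  show ?case
  proof (cases "\<exists>i\<in>I. \<exists>j\<in>I. i \<noteq> j \<and> v (X i) + v (X j) < t")
    case True
    then obtain i j where ij: "i\<in>I" "j\<in>I" "i\<noteq>j" "v (X i) + v (X j) < t" by blast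
    define X' where "X' = X(i := X i \<union> X j)"
    let ?I = "I - {j}"
    have vi: "v (X i) \<ge> 0" "v (X j) \<ge> 0" using nonneg less.prems(3) ij by auto
    have XiM: "X i \<subseteq> M" "X j \<subseteq> M" using less.prems(3) ij by auto
    have disj: "X i \<inter> X j = {}" using less.prems(4) ij by auto
    have Di: "max 0 (\<mu> - v (X i)) = \<mu> - v (X i)" "max 0 (\<mu> - v (X j)) = \<mu> - v (X j)"
      using ij vi tmu by auto
    have vX': "v (X' i) = v (X i) + v (X j)" unfolding X'_def using add[OF XiM disj] by simp
    have Dn: "max 0 (\<mu> - v (X' i)) = \<mu> - v (X i) - v (X j)" using vX' ij tmu by auto
    have i2: "i \<in> ?I" using ij by auto
    have s1: "(\<Sum>l\<in>I. max 0 (\<mu> - v (X l))) = max 0 (\<mu> - v (X j)) + max 0 (\<mu> - v (X i))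
         + (\<Sum>l\<in>?I - {i}. max 0 (\<mu> - v (X l)))"
      using fin ij i2 by (simp add: sum.remove[of I j] sum.remove[of ?I i])
    have s3: "(\<Sum>l\<in>?I - {i}. max 0 (\<mu> - v (X' l))) = (\<Sum>l\<in>?I - {i}. max 0 (\<mu> - v (X l)))"
      by (rule sum.cong) (auto simp: X'_def)
    have s2: "(\<Sum>l\<in>?I. max 0 (\<mu> - v (X' l))) = max 0 (\<mu> - v (X' i)) + (\<Sum>l\<in>?I - {i}. max 0 (\<mu> - v (X' l)))"
      using fin i2 by (simp add: sum.remove[of ?I i])
    have nn: "(\<Sum>l\<in>?I - {i}. max 0 (\<mu> - v (X l))) \<ge> 0" by (rule sum_nonneg) auto
    have pos: "\<mu> - v (X i) > 0" using ij vi tmu by auto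
    have "real K * t > 0" using less.prems(5) s1 Di nn pos vi ij tmu by linarith
    then have K1: "K \<ge> 1" by (cases K) auto
    have sumD': "(\<Sum>l\<in>?I. max 0 (\<mu> - v (X' l))) \<le> real (K - 1) * t"
    proof -
      have "(\<Sum>l\<in>?I. max 0 (\<mu> - v (X' l))) = (\<Sum>l\<in>I. max 0 (\<mu> - v (X l))) - \<mu>"
        using s1 s2 s3 Di Dn by linarith
      also have "\<dots> \<le> real K * t - t" using less.prems(5) tmu by linarith
      also have "\<dots> = real (K - 1) * t" using K1 by (simp add: of_nat_diff algebra_simps)
      finally show ?thesis .
    qed
    have cI: "card ?I = card I - 1" using fin ij by simp
    have cI0: "card I \<ge> 1" using fin ij by (metis card_0_eq empty_iff less_one not_le)
    have IH: "\<exists>P. is_partition (\<Union>l\<in>?I. X' l) (card ?I - (K - 1)) P \<and> (\<forall>l<card ?I - (K - 1). v (P l) \<ge> t)"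
    proof (rule less.hyps)
      show "card ?I < card I" using cI cI0 by simp
      show "finite ?I" using fin by simp
      show "card ?I \<le> n" using cI less.prems(2) by simp
      show "\<forall>l\<in>?I. X' l \<subseteq> M" using less.prems(3) ij by (auto simp: X'_def)
      show "\<forall>a\<in>?I. \<forall>b\<in>?I. a \<noteq> b \<longrightarrow> X' a \<inter> X' b = {}"
      proof (intro ballI impI)
        fix a b assume a: "a \<in> ?I" "b \<in> ?I" "a \<noteq> b"
        then have ab: "a \<noteq> j" "b \<noteq> j" "a \<in> I" "b \<in> I" by auto
        have D: "\<And>c d. c \<in> I \<Longrightarrow> d \<in> I \<Longrightarrow> c \<noteq> d \<Longrightarrow> X c \<inter> X d = {}"
          using less.prems(4) by blast
        show "X' a \<inter> X' b = {}"
        proof (cases "a = i")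
          case True
          then have "b \<noteq> i" using a by auto
          then show ?thesis using True D[of i b] D[of j b] ab ij unfolding X'_def by auto
        next
          case False
          show ?thesis
          proof (cases "b = i")
            case True
            then show ?thesis using False D[of a i] D[of a j] ab ij unfolding X'_def by auto
          next
            case False2: False
            then show ?thesis using False D[of a b] ab a(3) unfolding X'_def by auto
          qed
        qed
      qed
      show "(\<Sum>l\<in>?I. max 0 (\<mu> - v (X' l))) \<le> real (K - 1) * t" by (rule sumD')
      show "K - 1 < card ?I" using cI K1 less.prems(6) by simp
    qed
    have e1: "card ?I - (K - 1) = card I - K" using cI K1 less.prems(6) by simp
    have e2: "(\<Union>l\<in>?I. X' l) = (\<Union>l\<in>I. X l)" using ij unfolding X'_def by auto
    show ?thesis using IH unfolding e1 e2 .
  next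
    case False
    let ?G = "{i\<in>I. v (X i) \<ge> t}"
    let ?B = "{i\<in>I. v (X i) < t}"
    have finB: "finite ?B" "finite ?G" using fin by auto
    have cGB: "card ?G + card ?B = card I"
    proof -
      have "?G \<union> ?B = I" by auto
      moreover have "?G \<inter> ?B = {}" by auto
      ultimately show ?thesis using finB card_Un_disjoint by metis
    qed
    have bK: "card ?B \<le> 2 * K"
    proof (cases "card ?B = 0")
      case True then show ?thesis by simp
    next
      case False
      then have ne: "?B \<noteq> {}" by (metis card.empty)
      have "real (card ?B) * (\<mu> - t) = (\<Sum>l\<in>?B. \<mu> - t)" by simp
      also have "\<dots> < (\<Sum>l\<in>?B. max 0 (\<mu> - v (X l)))"
        by (rule sum_strict_mono[OF finB(1) ne]) auto
      also have "\<dots> \<le> (\<Sum>l\<in>I. max 0 (\<mu> - v (X l)))"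
        by (rule sum_mono2[OF fin]) auto
      also have "\<dots> \<le> real K * t" by (rule less.prems(5))
      finally have "real (card ?B) * (\<mu> - t) < real K * t" .
      moreover have "card ?B \<le> n" using cGB less.prems(2) by linarith
      ultimately show ?thesis using H False by simp
    qed
    have T: "card I - K \<le> card ?G + card ?B div 2" using cGB bK by linarith
    have "\<exists>P. is_partition (\<Union>i\<in>I. X i) (card I - K) P \<and> (\<forall>j<card I - K. v (P j) \<ge> t)"
    proof (rule groupB[where M = M and f = v, OF mono _ _ _ _ _ T])
      show "\<forall>i\<in>I. \<forall>j\<in>I. i \<noteq> j \<longrightarrow> v (X i) < t \<longrightarrow> v (X j) < t \<longrightarrow> v (X i \<union> X j) \<ge> t"
      proof (intro ballI impI)
        fix a b assume ab: "a \<in> I" "b \<in> I" "a \<noteq> b"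
        then have "v (X a \<union> X b) = v (X a) + v (X b)" using less.prems(3,4) add by auto
        moreover have "\<not> v (X a) + v (X b) < t" using False ab by blast
        ultimately show "v (X a \<union> X b) \<ge> t" by linarith
      qed
      show "1 \<le> card I - K" using less.prems(6) by simp
    qed (use less.prems in auto)
    then show ?thesis .
  qed
qed



lemma rho_bounds: assumes "n \<ge> 1" shows "2/3 \<le> rho n" "rho n \<le> 1"
proof -
  have "2/3 \<le> rho n \<and> rho n \<le> 1"
  proof (cases "odd n")
    case True
    have p: "3 * real n - 1 > 0" using assms by simp
    have "2/3 \<le> 2 * real n / (3 * real n - 1)" using p by (simp add: field_simps)
    moreover have "2 * real n / (3 * real n - 1) \<le> 1" using p assms by (simp add: field_simps)
    ultimately show ?thesis using True by (simp add: rho_def)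
  next
    case False
    then have "n \<noteq> 1" by auto
    then have n2: "n \<ge> 2" using assms by linarith
    then have n2': "real n \<ge> 2" by simp
    have p: "3 * real n - 4 > 0" using n2' by simp
    have "2/3 \<le> (2 * real n - 2) / (3 * real n - 4)" using p by (simp add: field_simps)
    moreover have "(2 * real n - 2) / (3 * real n - 4) \<le> 1" using p n2' by (simp add: field_simps)
    ultimately show ?thesis using False by (simp add: rho_def)
  qed
  then show "2/3 \<le> rho n" "rho n \<le> 1" by auto
qed

lemma rho_H:
  assumes n: "n \<ge> 1" and b: "1 \<le> b" "b \<le> n" and lt: "real b < (real K + real b) * rho n"
  shows "b \<le> 2 * K"
proof (rule ccontr)
  assume "\<not> b \<le> 2 * K"
  then have bK: "2 * K < b" by simp
  define c where "c = b div 2"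
  define N where "N = real n"
  have key: "(real K + real b) * rho n \<le> real b"
  proof (cases "odd n")
    case nodd: True
    have p: "3 * N - 1 > 0" using n by (simp add: N_def)
    have r: "rho n = 2 * N / (3 * N - 1)" using nodd by (simp add: rho_def N_def)
    have "(real K + real b) * (2 * N) \<le> real b * (3 * N - 1)"
    proof (cases "odd b")
      case True
      then have bc: "b = 2 * c + 1" by (simp add: c_def)
      then have Kc: "K \<le> c" using bK by simp
      have h: "real K * (2 * N) \<le> 2 * (real c * N)" using Kc by (simp add: N_def mult_right_mono)
      have h2: "2 * real c + 1 \<le> N" using b bc by (simp add: N_def)
      have rb: "real b = 2 * real c + 1" using bc by simp
      have e1: "(real K + real b) * (2 * N) = real K * (2 * N) + 4 * (real c * N) + 2 * N" unfolding rb by (simp add: algebra_simps)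
      have e2: "real b * (3 * N - 1) = 6 * (real c * N) + 3 * N - 2 * real c - 1" unfolding rb by (simp add: algebra_simps)
      show ?thesis unfolding e1 e2 using h h2 by linarith
    next
      case False
      then have bc: "b = 2 * c" by (simp add: c_def)
      then have Kc: "K + 1 \<le> c" using bK by simp
      have h: "real K * (2 * N) \<le> 2 * (real c * N) - 2 * N"
      proof -
        have "real K * (2 * N) \<le> (real c - 1) * (2 * N)" using Kc by (intro mult_right_mono) (auto simp: N_def)
        then show ?thesis by (simp add: algebra_simps)
      qed
      have h2: "real c \<le> N" using b bc by (simp add: N_def)
      have rb: "real b = 2 * real c" using bc by simp
      have e1: "(real K + real b) * (2 * N) = real K * (2 * N) + 4 * (real c * N)" unfolding rb by (simp add: algebra_simps)
      have e2: "real b * (3 * N - 1) = 6 * (real c * N) - 2 * real c" unfolding rb by (simp add: algebra_simps)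
      show ?thesis unfolding e1 e2 using h h2 by linarith
    qed
    then have "(real K + real b) * (2 * N) / (3 * N - 1) \<le> real b" using p by (simp add: pos_divide_le_eq)
    then show ?thesis unfolding r by (simp add: times_divide_eq_right)
  next
    case neven: False
    then have "n \<noteq> 1" by auto
    then have n2: "n \<ge> 2" using n by linarith
    have p: "3 * N - 4 > 0" using n2 by (simp add: N_def)
    have p2: "2 * N - 2 \<ge> 0" using n2 by (simp add: N_def)
    have r: "rho n = (2 * N - 2) / (3 * N - 4)" using neven by (simp add: rho_def N_def)
    have "(real K + real b) * (2 * N - 2) \<le> real b * (3 * N - 4)"
    proof (cases "odd b")
      case True
      then have bc: "b = 2 * c + 1" by (simp add: c_def)
      then have Kc: "K \<le> c" using bK by simp
      have "b \<noteq> n" using True neven by auto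
      then have "b + 1 \<le> n" using b by simp
      then have "2 * real c + 2 \<le> N" using bc by (simp add: N_def)
      moreover have "real K * (2 * N - 2) \<le> real c * (2 * N - 2)" using Kc p2 by (intro mult_right_mono) auto
      moreover have rb: "real b = 2 * real c + 1" using bc by simp
      moreover have e1: "(real K + real b) * (2 * N - 2) = real K * (2 * N - 2) + 4 * (real c * N) - 4 * real c + 2 * N - 2" unfolding rb by (simp add: algebra_simps)
      moreover have e2: "real b * (3 * N - 4) = 6 * (real c * N) - 8 * real c + 3 * N - 4" unfolding rb by (simp add: algebra_simps)
      moreover have e3: "real c * (2 * N - 2) = 2 * (real c * N) - 2 * real c" by (simp add: algebra_simps)
      ultimately show ?thesis by linarith
    next
      case False
      then have bc: "b = 2 * c" by (simp add: c_def)
      then have Kc: "K + 1 \<le> c" using bK by simp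
      have "real K * (2 * N - 2) \<le> (real c - 1) * (2 * N - 2)" using Kc p2 by (intro mult_right_mono) auto
      moreover have "real c + 1 \<le> N" using b bc Kc by (simp add: N_def)
      moreover have rb: "real b = 2 * real c" using bc by simp
      moreover have e1: "(real K + real b) * (2 * N - 2) = real K * (2 * N - 2) + 4 * (real c * N) - 4 * real c" unfolding rb by (simp add: algebra_simps)
      moreover have e2: "real b * (3 * N - 4) = 6 * (real c * N) - 8 * real c" unfolding rb by (simp add: algebra_simps)
      moreover have e3: "(real c - 1) * (2 * N - 2) = 2 * (real c * N) - 2 * real c - 2 * N + 2" by (simp add: algebra_simps)
      ultimately show ?thesis by linarith
    qed
    then have "(real K + real b) * (2 * N - 2) / (3 * N - 4) \<le> real b" using p by (simp add: pos_divide_le_eq)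
    then show ?thesis unfolding r by (simp add: times_divide_eq_right)
  qed
  then show False using lt by simp
qed


lemma additive_union:
  assumes "additive_val M v" "finite M" "finite I" "\<forall>i\<in>I. Y i \<subseteq> M"
    "\<forall>i\<in>I. \<forall>j\<in>I. i \<noteq> j \<longrightarrow> Y i \<inter> Y j = {}"
  shows "v (\<Union>i\<in>I. Y i) = (\<Sum>i\<in>I. v (Y i))"
proof -
  have UM: "(\<Union>i\<in>I. Y i) \<subseteq> M" using assms(4) by auto
  have "v (\<Union>i\<in>I. Y i) = (\<Sum>e\<in>(\<Union>i\<in>I. Y i). v {e})" using assms(1) UM unfolding additive_val_def by blast
  also have "\<dots> = (\<Sum>i\<in>I. \<Sum>e\<in>Y i. v {e})"
    by (rule sum.UNION_disjoint) (use assms(2-5) in \<open>auto intro: finite_subset[of _ M]\<close>)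
  also have "\<dots> = (\<Sum>i\<in>I. v (Y i))"
    by (rule sum.cong) (use assms(1,4) in \<open>auto simp: additive_val_def\<close>)
  finally show ?thesis .
qed

lemma additive_two:
  assumes "additive_val M v" "finite M" "Y \<subseteq> M" "Z \<subseteq> M" "Y \<inter> Z = {}"
  shows "v (Y \<union> Z) = v Y + v Z"
proof -
  have "v (Y \<union> Z) = (\<Sum>e\<in>Y \<union> Z. v {e})" using assms unfolding additive_val_def by blast
  also have "\<dots> = (\<Sum>e\<in>Y. v {e}) + (\<Sum>e\<in>Z. v {e})"
    by (rule sum.union_disjoint) (use assms finite_subset in auto)
  also have "\<dots> = v Y + v Z" using assms unfolding additive_val_def by simp
  finally show ?thesis .
qed

lemma subadd_union:
  fixes B :: "nat \<Rightarrow> 'a set" and k :: nat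
  assumes "subadditive_val M v" "v {} = 0"
  shows "(\<forall>j<k. B j \<subseteq> M) \<Longrightarrow> v (\<Union>j<k. B j) \<le> (\<Sum>j<k. v (B j))"
proof (induction k)
  case 0 then show ?case using assms(2) by simp
next
  case (Suc k)
  have e: "(\<Union>j<Suc k. B j) = (\<Union>j<k. B j) \<union> B k" by (auto simp: lessThan_Suc)
  have "v ((\<Union>j<k. B j) \<union> B k) \<le> v (\<Union>j<k. B j) + v (B k)"
    using assms(1) Suc.prems unfolding subadditive_val_def by (meson UN_least lessThan_iff less_Suc_eq)
  also have "\<dots> \<le> (\<Sum>j<k. v (B j)) + v (B k)" using Suc by simp
  finally show ?case unfolding e by simp
qed

lemma val_facts:
  assumes "valuation M v"
  shows "\<And>Y Z. Y \<subseteq> Z \<Longrightarrow> Z \<subseteq> M \<Longrightarrow> v Y \<le> v Z" "\<And>Y. Y \<subseteq> M \<Longrightarrow> v Y \<ge> 0" "v {} = 0"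
  using assms unfolding valuation_def by auto

lemma min_facts:
  fixes n :: nat
  assumes "n \<ge> 1" "valuation M v" "\<forall>j<n. Q j \<subseteq> M"
  shows "\<forall>j<n. Min ((\<lambda>j. v (Q j)) ` {..<n}) \<le> v (Q j)" "Min ((\<lambda>j. v (Q j)) ` {..<n}) \<ge> 0"
proof -
  show "\<forall>j<n. Min ((\<lambda>j. v (Q j)) ` {..<n}) \<le> v (Q j)" by (auto intro!: Min_le finite_imageI)
  have "0 \<in> {..<n}" using assms(1) by simp
  then have ne: "(\<lambda>j. v (Q j)) ` {..<n} \<noteq> {}" by blast
  have "Min ((\<lambda>j. v (Q j)) ` {..<n}) \<in> (\<lambda>j. v (Q j)) ` {..<n}" by (rule Min_in) (use ne in auto)
  then obtain j where "j < n" "Min ((\<lambda>j. v (Q j)) ` {..<n}) = v (Q j)" by auto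
  then show "Min ((\<lambda>j. v (Q j)) ` {..<n}) \<ge> 0" using val_facts(2)[OF assms(2)] assms(3) by auto
qed

lemma core1:
  assumes fin: "finite M" and val: "valuation M v" and sa: "subadditive_val M v"
    and Q: "is_partition M n Q" and n: "n \<ge> 1"
  shows "RMMS_prop M v n (Min ((\<lambda>j. v (Q j)) ` {..<n}) / real n)"
proof -
  define \<mu> where "\<mu> = Min ((\<lambda>j. v (Q j)) ` {..<n})"
  have QM: "\<forall>j<n. Q j \<subseteq> M" using Q unfolding is_partition_def by auto
  have muQ: "\<forall>j<n. \<mu> \<le> v (Q j)" and mu0: "\<mu> \<ge> 0" using min_facts[OF n val QM] unfolding \<mu>_def by auto
  note mono = val_facts(1)[OF val] and nonneg = val_facts(2)[OF val] and v0 = val_facts(3)[OF val]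
  show ?thesis unfolding RMMS_prop_def \<mu>_def[symmetric]
  proof (intro allI impI)
    fix k and B :: "nat \<Rightarrow> 'a set"
    assume k: "k < n" and H: "(\<forall>j<k. B j \<subseteq> M) \<and> (\<forall>i<k. \<forall>j<k. i \<noteq> j \<longrightarrow> B i \<inter> B j = {}) \<and> (\<forall>j<k. v (B j) < \<mu> / real n)"
    define U where "U = (\<Union>j<k. B j)"
    define t where "t = \<mu> / real n"
    have UM: "U \<subseteq> M" using H unfolding U_def by auto
    have "v U \<le> (\<Sum>j<k. v (B j))" unfolding U_def using subadd_union[OF sa v0] H by blast
    also have "\<dots> \<le> (\<Sum>j<k. t)" by (rule sum_mono) (use H in \<open>auto simp: t_def\<close>)
    also have "\<dots> = real k * t" by simp
    finally have vU: "v U \<le> real k * t" .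
    have t0: "t \<ge> 0" using mu0 by (simp add: t_def)
    have kt: "real k * t \<le> \<mu> - t"
    proof -
      have "real k \<le> real n - 1" using k by simp
      then have "real k * t \<le> (real n - 1) * t" using t0 by (rule mult_right_mono)
      also have "\<dots> = \<mu> - t" using n by (simp add: t_def field_simps)
      finally show ?thesis .
    qed
    have good: "\<forall>i<n. v (Q i - U) \<ge> t"
    proof (intro allI impI)
      fix i assume i: "i < n"
      have "v (Q i) = v ((Q i - U) \<union> (Q i \<inter> U))" by (metis Diff_partition Int_lower1 Un_commute inf_commute Int_Diff_Un)
      also have "\<dots> \<le> v (Q i - U) + v (Q i \<inter> U)" using sa QM i unfolding subadditive_val_def by (meson Diff_subset inf.coboundedI1 order_trans)
      also have "\<dots> \<le> v (Q i - U) + v U" using mono[of "Q i \<inter> U" U] UM by auto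
      finally show "v (Q i - U) \<ge> t" using muQ i vU kt by fastforce
    qed
    have "\<exists>P. is_partition (\<Union>i\<in>{..<n}. Q i - U) (n - k) P \<and> (\<forall>j<n - k. v (P j) \<ge> t)"
    proof (rule groupB[where M = M and f = v, OF mono])
      show "\<forall>i\<in>{..<n}. \<forall>j\<in>{..<n}. i \<noteq> j \<longrightarrow> v (Q i - U) < t \<longrightarrow> v (Q j - U) < t \<longrightarrow> v ((Q i - U) \<union> (Q j - U)) \<ge> t"
        using good by auto
      have "{i\<in>{..<n}. v (Q i - U) \<ge> t} = {..<n}" using good by auto
      then show "n - k \<le> card {i\<in>{..<n}. v (Q i - U) \<ge> t} + card {i\<in>{..<n}. v (Q i - U) < t} div 2" by simp
      show "\<forall>i\<in>{..<n}. \<forall>j\<in>{..<n}. i \<noteq> j \<longrightarrow> (Q i - U) \<inter> (Q j - U) = {}" using Q unfolding is_partition_def by auto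
    qed (use QM k in auto)
    moreover have "(\<Union>i\<in>{..<n}. Q i - U) = M - U" using Q unfolding is_partition_def by auto
    ultimately show "\<exists>P. is_partition (M - (\<Union>j<k. B j)) (n - k) P \<and> (\<forall>j<n - k. v (P j) \<ge> \<mu> / real n)"
      unfolding U_def t_def by simp
  qed
qed

lemma core2:
  assumes fin: "finite M" and val: "valuation M v" and ad: "additive_val M v"
    and Q: "is_partition M n Q" and n: "n \<ge> 1"
  shows "RMMS_prop M v n (rho n * Min ((\<lambda>j. v (Q j)) ` {..<n}))"
proof -
  define \<mu> where "\<mu> = Min ((\<lambda>j. v (Q j)) ` {..<n})"
  define t where "t = rho n * \<mu>"
  have QM: "\<forall>j<n. Q j \<subseteq> M" using Q unfolding is_partition_def by auto
  have muQ: "\<forall>j<n. \<mu> \<le> v (Q j)" and mu0: "\<mu> \<ge> 0" using min_facts[OF n val QM] unfolding \<mu>_def by auto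
  note mono = val_facts(1)[OF val] and nonneg = val_facts(2)[OF val] and v0 = val_facts(3)[OF val]
  note add = additive_two[OF ad fin]
  have rb: "2/3 \<le> rho n" "rho n \<le> 1" using rho_bounds[OF n] by auto
  have t0: "0 \<le> t" using rb mu0 by (simp add: t_def)
  have tmu: "t \<le> \<mu>" using rb mu0 unfolding t_def by (simp add: mult_left_le_one_le)
  have Hb: "\<And>b K. 1 \<le> b \<Longrightarrow> b \<le> n \<Longrightarrow> real b * (\<mu> - t) < real K * t \<Longrightarrow> b \<le> 2 * K"
  proof -
    fix b K assume b: "1 \<le> b" "b \<le> n" and lt: "real b * (\<mu> - t) < real K * t"
    have "\<mu> * (real b - real b * rho n) < \<mu> * (real K * rho n)" using lt unfolding t_def by (simp add: algebra_simps)
    then have mpos: "\<mu> > 0" and "real b - real b * rho n < real K * rho n"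
      using mu0 by (auto simp: mult_less_cancel_left)
    then have "real b < (real K + real b) * rho n" by (simp add: algebra_simps)
    then show "b \<le> 2 * K" using rho_H[OF n b] by blast
  qed
  show ?thesis unfolding RMMS_prop_def \<mu>_def[symmetric] t_def[symmetric]
  proof (intro allI impI)
    fix k and B :: "nat \<Rightarrow> 'a set"
    assume k: "k < n" and H: "(\<forall>j<k. B j \<subseteq> M) \<and> (\<forall>i<k. \<forall>j<k. i \<noteq> j \<longrightarrow> B i \<inter> B j = {}) \<and> (\<forall>j<k. v (B j) < t)"
    define U where "U = (\<Union>j<k. B j)"
    have UM: "U \<subseteq> M" using H unfolding U_def by auto
    have "v U = (\<Sum>j<k. v (B j))" unfolding U_def by (rule additive_union[OF ad fin]) (use H in auto)
    also have "\<dots> \<le> (\<Sum>j<k. t)" by (rule sum_mono) (use H in \<open>auto simp: less_imp_le\<close>)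
    also have "\<dots> = real k * t" by simp
    finally have vU: "v U \<le> real k * t" .
    have per: "\<forall>i<n. max 0 (\<mu> - v (Q i - U)) \<le> v (Q i \<inter> U)"
    proof (intro allI impI)
      fix i assume i: "i < n"
      have "v (Q i) = v ((Q i - U) \<union> (Q i \<inter> U))" by (metis Diff_partition Int_lower1 Un_commute inf_commute Int_Diff_Un)
      also have "\<dots> = v (Q i - U) + v (Q i \<inter> U)" by (rule add) (use QM i in auto)
      finally have "v (Q i) = v (Q i - U) + v (Q i \<inter> U)" .
      moreover have "v (Q i \<inter> U) \<ge> 0" using nonneg[of "Q i \<inter> U"] UM by auto
      ultimately show "max 0 (\<mu> - v (Q i - U)) \<le> v (Q i \<inter> U)" using muQ i by auto
    qed
    have "(\<Sum>i\<in>{..<n}. max 0 (\<mu> - v (Q i - U))) \<le> (\<Sum>i\<in>{..<n}. v (Q i \<inter> U))"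
      by (rule sum_mono) (use per in auto)
    also have "\<dots> = v (\<Union>i\<in>{..<n}. Q i \<inter> U)"
    proof -
      have Ysub: "\<forall>i\<in>{..<n}. Q i \<inter> U \<subseteq> M" using UM by auto
      have Ydisj: "\<forall>i\<in>{..<n}. \<forall>j\<in>{..<n}. i \<noteq> j \<longrightarrow> Q i \<inter> U \<inter> (Q j \<inter> U) = {}"
        using Q unfolding is_partition_def by blast
      show ?thesis by (rule additive_union[OF ad fin _ Ysub Ydisj, symmetric]) simp
    qed
    also have "(\<Union>i\<in>{..<n}. Q i \<inter> U) = U" using Q UM unfolding is_partition_def by auto
    finally have sumD: "(\<Sum>i\<in>{..<n}. max 0 (\<mu> - v (Q i - U))) \<le> real k * t" using vU by linarith
    have "\<exists>P. is_partition (\<Union>i\<in>{..<n}. Q i - U) (card {..<n} - k) P \<and> (\<forall>j<card {..<n} - k. v (P j) \<ge> t)"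
    proof (rule groupA[where M = M and v = v and n = n, OF mono nonneg add t0 tmu Hb])
      show "\<forall>i\<in>{..<n}. \<forall>j\<in>{..<n}. i \<noteq> j \<longrightarrow> (Q i - U) \<inter> (Q j - U) = {}" using Q unfolding is_partition_def by auto
    qed (use QM k sumD in auto)
    moreover have "(\<Union>i\<in>{..<n}. Q i - U) = M - U" using Q unfolding is_partition_def by auto
    ultimately show "\<exists>P. is_partition (M - (\<Union>j<k. B j)) (n - k) P \<and> (\<forall>j<n - k. v (P j) \<ge> t)"
      unfolding U_def by simp
  qed
qed

lemma sup_scale:
  fixes S :: "real set"
  assumes "S \<noteq> {}" "c > 0" "\<forall>x\<in>S. c * x \<le> R"
  shows "c * Sup S \<le> R"
proof -
  have "Sup S \<le> R / c" by (rule cSup_least) (use assms in \<open>auto simp: pos_le_divide_eq mult.commute\<close>)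
  then show ?thesis using assms(2) by (simp add: pos_le_divide_eq mult.commute)
qed

theorem mainTheorem4:
  fixes M :: "'a set" and v :: "'a set \<Rightarrow> real" and n :: nat
  assumes "finite M" and "n \<ge> 1" and "valuation M v"
  shows "(subadditive_val M v \<longrightarrow> RMMS M v n \<ge> MMS M v n / real n)
       \<and> (additive_val M v \<longrightarrow> RMMS M v n \<ge> rho n * MMS M v n
                              \<and> RMMS M v n \<ge> 2 / 3 * MMS M v n)"
proof -
  note fin = assms(1) and n = assms(2) and val = assms(3)
  note mono = val_facts(1)[OF val] and nonneg = val_facts(2)[OF val]
  define S where "S = {Min ((\<lambda>j. v (P j)) ` {..<n}) | P. is_partition M n P}"
  have MMS: "MMS M v n = Sup S" unfolding MMS_def S_def ..
  have "is_partition M n (\<lambda>j. if j = 0 then M else {})" using n unfolding is_partition_def by auto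
  then have Sne: "S \<noteq> {}" unfolding S_def by blast
  have bdd: "bdd_above {t. RMMS_prop M v n t}"
  proof (rule bdd_aboveI)
    fix t assume "t \<in> {t. RMMS_prop M v n t}"
    then have "RMMS_prop M v n t" by simp
    then have R0: "0 < n \<longrightarrow> (\<forall>B::nat \<Rightarrow> 'a set. (\<forall>j<0. B j \<subseteq> M) \<and> (\<forall>i<0. \<forall>j<0. i \<noteq> j \<longrightarrow> B i \<inter> B j = {}) \<and> (\<forall>j<0. v (B j) < t)
       \<longrightarrow> (\<exists>P. is_partition (M - (\<Union>j<0. B j)) (n - 0) P \<and> (\<forall>j<n - 0. v (P j) \<ge> t)))"
      unfolding RMMS_prop_def by blast
    obtain P where P: "is_partition M n P" "\<forall>j<n. v (P j) \<ge> t" using R0 n by auto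
    have "P 0 \<subseteq> M" using P(1) n unfolding is_partition_def by auto
    then show "t \<le> v M" using P(2) n mono[of "P 0" M] by fastforce
  qed
  have RM: "\<And>t. RMMS_prop M v n t \<Longrightarrow> t \<le> RMMS M v n"
    unfolding RMMS_def by (rule cSup_upper) (use bdd in auto)
  have Sx: "\<And>x. x \<in> S \<Longrightarrow> \<exists>P. is_partition M n P \<and> x = Min ((\<lambda>j. v (P j)) ` {..<n})"
    unfolding S_def by blast
  have S0: "\<And>x. x \<in> S \<Longrightarrow> x \<ge> 0"
  proof -
    fix x assume "x \<in> S"
    then obtain P where P: "is_partition M n P" "x = Min ((\<lambda>j. v (P j)) ` {..<n})" using Sx by blast
    have "\<forall>j<n. P j \<subseteq> M" using P(1) unfolding is_partition_def by auto
    then show "x \<ge> 0" using min_facts[OF n val] P(2) by auto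
  qed
  have part1: "subadditive_val M v \<longrightarrow> RMMS M v n \<ge> MMS M v n / real n"
  proof
    assume sa: "subadditive_val M v"
    have "(1 / real n) * Sup S \<le> RMMS M v n"
    proof (rule sup_scale[OF Sne])
      show "1 / real n > 0" using n by simp
      show "\<forall>x\<in>S. 1 / real n * x \<le> RMMS M v n"
      proof
        fix x assume "x \<in> S"
        then obtain P where P: "is_partition M n P" "x = Min ((\<lambda>j. v (P j)) ` {..<n})" using Sx by blast
        have "x / real n \<le> RMMS M v n" using RM[OF core1[OF fin val sa P(1) n]] P(2) by simp
        then show "1 / real n * x \<le> RMMS M v n" by simp
      qed
    qed
    then show "RMMS M v n \<ge> MMS M v n / real n" unfolding MMS by simp
  qed
  have part2: "additive_val M v \<longrightarrow> RMMS M v n \<ge> rho n * MMS M v n \<and> RMMS M v n \<ge> 2 / 3 * MMS M v n"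
  proof
    assume ad: "additive_val M v"
    have rb: "2/3 \<le> rho n" "rho n \<le> 1" using rho_bounds[OF n] by auto
    have each: "\<And>x. x \<in> S \<Longrightarrow> rho n * x \<le> RMMS M v n"
    proof -
      fix x assume "x \<in> S"
      then obtain P where P: "is_partition M n P" "x = Min ((\<lambda>j. v (P j)) ` {..<n})" using Sx by blast
      show "rho n * x \<le> RMMS M v n" using RM[OF core2[OF fin val ad P(1) n]] P(2) by simp
    qed
    have A: "rho n * Sup S \<le> RMMS M v n"
      by (rule sup_scale[OF Sne]) (use rb each in auto)
    have B: "2 / 3 * Sup S \<le> RMMS M v n"
    proof (rule sup_scale[OF Sne])
      show "(2::real) / 3 > 0" by simp
      show "\<forall>x\<in>S. 2 / 3 * x \<le> RMMS M v n"
      proof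
        fix x assume x: "x \<in> S"
        have "2 / 3 * x \<le> rho n * x" using rb(1) S0[OF x] by (rule mult_right_mono)
        then show "2 / 3 * x \<le> RMMS M v n" using each[OF x] by linarith
      qed
    qed
    show "RMMS M v n \<ge> rho n * MMS M v n \<and> RMMS M v n \<ge> 2 / 3 * MMS M v n" using A B unfolding MMS by simp
  qed
  show ?thesis using part1 part2 by blast
qed

end
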